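(* Let $G$ be a finite trivially power-colorable graph with $k=\chi(G)$, let $\lambda$ be an infinite cardinal, and let $\Phi$ be a proper $k$-coloring of $G^\lambda$. Then there exist an ultrafilter $\mathcal U$ on $\lambda$ and a proper $k$-coloring $\phi$ of $G$ such that $\Phi=\phi^{\mathcal U}$.
   Context: Graphs are simple and undirected; a $k$-coloring is a proper coloring with colors in $\{0,\dots,k-1\}$. For graphs $(G_i)_{i\in I}$, the product $\times_{i\in I}G_i$ has vertex set $\times_{i\in I}V(G_i)$, with $(u_i)$ adjacent to $(v_i)$ iff $u_iv_i\in E(G_i)$ for all $i$; $G^I$ is the product of copies of $G$ indexed by $I$, and $G^n=G^{\{1,\dots,n\}}$. A coloring $\Phi$ of a product is trivial if there exist an index $i^*$ and a proper coloring $\phi$ of $G_{i^*}$ with $\Phi(v)=\phi(v_{i^*})$ for all $v$. $G$ is trivially power-colorable if for every positive integer $n$, every $\chi(G)$-coloring of $G^n$ is trivial. For an ultrafilter $\mathcal U$ on $\lambda$ and $\mathbf v=(v_\alpha)_{\alpha<\lambda}\in V(G^\lambda)$, $\mathbf v_{\mathcal U}$ is the unique $x\in V(G)$ with $\{\alpha<\lambda:v_\alpha=x\}\in\mathcal U$, and $\phi^{\mathcal U}(\mathbf v)=\phi(\mathbf v_{\mathcal U})$. *)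

theory Defs
  imports Main "HOL-Library.FuncSet"
begin

definition simple_graph :: "'a set \<Rightarrow> ('a \<Rightarrow> 'a \<Rightarrow> bool) \<Rightarrow> bool" where
  "simple_graph V E \<longleftrightarrow> (\<forall>u v. E u v \<longrightarrow> u \<in> V \<and> v \<in> V) \<and>
     (\<forall>u v. E u v \<longrightarrow> E v u) \<and> (\<forall>v. \<not> E v v)"

definition proper_coloring :: "'a set \<Rightarrow> ('a \<Rightarrow> 'a \<Rightarrow> bool) \<Rightarrow> ('a \<Rightarrow> nat) \<Rightarrow> bool" where
  "proper_coloring V E c \<longleftrightarrow> (\<forall>u\<in>V. \<forall>v\<in>V. E u v \<longrightarrow> c u \<noteq> c v)"

definition k_coloring :: "nat \<Rightarrow> 'a set \<Rightarrow> ('a \<Rightarrow> 'a \<Rightarrow> bool) \<Rightarrow> ('a \<Rightarrow> nat) \<Rightarrow> bool" where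
  "k_coloring k V E c \<longleftrightarrow> proper_coloring V E c \<and> (\<forall>v\<in>V. c v < k)"

definition chromatic_number :: "'a set \<Rightarrow> ('a \<Rightarrow> 'a \<Rightarrow> bool) \<Rightarrow> nat" where
  "chromatic_number V E = (LEAST k. \<exists>c. k_coloring k V E c)"

definition power_verts :: "'i set \<Rightarrow> 'a set \<Rightarrow> ('i \<Rightarrow> 'a) set" where
  "power_verts I V = (I \<rightarrow>\<^sub>E V)"

definition power_edges :: "'i set \<Rightarrow> ('a \<Rightarrow> 'a \<Rightarrow> bool) \<Rightarrow> ('i \<Rightarrow> 'a) \<Rightarrow> ('i \<Rightarrow> 'a) \<Rightarrow> bool" where
  "power_edges I E u v \<longleftrightarrow> (\<forall>i\<in>I. E (u i) (v i))"

definition trivial_coloring :: "'i set \<Rightarrow> 'a set \<Rightarrow> ('a \<Rightarrow> 'a \<Rightarrow> bool) \<Rightarrow> (('i \<Rightarrow> 'a) \<Rightarrow> nat) \<Rightarrow> bool" where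
  "trivial_coloring I V E \<Phi> \<longleftrightarrow>
     (\<exists>i\<in>I. \<exists>\<phi>. proper_coloring V E \<phi> \<and> (\<forall>v\<in>power_verts I V. \<Phi> v = \<phi> (v i)))"

definition trivially_power_colorable :: "'a set \<Rightarrow> ('a \<Rightarrow> 'a \<Rightarrow> bool) \<Rightarrow> bool" where
  "trivially_power_colorable V E \<longleftrightarrow>
     (\<forall>n::nat. n \<ge> 1 \<longrightarrow> (\<forall>\<Phi>. k_coloring (chromatic_number V E) (power_verts {1..n} V) (power_edges {1..n} E) \<Phi>
        \<longrightarrow> trivial_coloring {1..n} V E \<Phi>))"

definition ultrafilter_on :: "'i set \<Rightarrow> 'i set set \<Rightarrow> bool" where
  "ultrafilter_on I U \<longleftrightarrow> U \<subseteq> Pow I \<and> I \<in> U \<and> {} \<notin> U \<and>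
     (\<forall>A B. A \<in> U \<longrightarrow> A \<subseteq> B \<longrightarrow> B \<subseteq> I \<longrightarrow> B \<in> U) \<and>
     (\<forall>A B. A \<in> U \<longrightarrow> B \<in> U \<longrightarrow> A \<inter> B \<in> U) \<and>
     (\<forall>A. A \<subseteq> I \<longrightarrow> A \<in> U \<or> I - A \<in> U)"

definition ult_point :: "'i set \<Rightarrow> 'i set set \<Rightarrow> 'a set \<Rightarrow> ('i \<Rightarrow> 'a) \<Rightarrow> 'a" where
  "ult_point I U V v = (THE x. x \<in> V \<and> {\<alpha>\<in>I. v \<alpha> = x} \<in> U)"

definition ult_coloring :: "'i set \<Rightarrow> 'i set set \<Rightarrow> 'a set \<Rightarrow> ('a \<Rightarrow> nat) \<Rightarrow> ('i \<Rightarrow> 'a) \<Rightarrow> nat" where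
  "ult_coloring I U V \<phi> v = \<phi> (ult_point I U V v)"

end

theory Submission
  imports Defs
begin

context
  fixes V :: "'a set" and E :: "'a \<Rightarrow> 'a \<Rightarrow> bool"
    and \<Lambda> :: "'i set" and \<Phi> :: "('i \<Rightarrow> 'a) \<Rightarrow> nat"
  assumes tpc: "trivially_power_colorable V E" and finV: "finite V"
    and LneE: "\<Lambda> \<noteq> {}"
    and col: "k_coloring (chromatic_number V E) (power_verts \<Lambda> V) (power_edges \<Lambda> E) \<Phi>"
begin

lemma emb_in: "w \<in> S \<rightarrow>\<^sub>E V \<Longrightarrow> (\<forall>\<alpha>\<in>\<Lambda>. q \<alpha> \<in> S) \<Longrightarrow> (\<lambda>\<alpha>\<in>\<Lambda>. w (q \<alpha>)) \<in> power_verts \<Lambda> V"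
  unfolding power_verts_def by auto

lemma L1:
  assumes fin: "finite S" and qS: "q ` \<Lambda> = S"
  shows "\<exists>s\<in>S. \<forall>w\<in>S \<rightarrow>\<^sub>E V. \<Phi> (\<lambda>\<alpha>\<in>\<Lambda>. w (q \<alpha>)) = \<Phi> (\<lambda>\<alpha>\<in>\<Lambda>. w s)"
proof -
  define n where "n = card S"
  obtain f where f: "bij_betw f {1..n} S" using ex_bij_betw_nat_finite_1[OF fin] n_def by blast
  have "S \<noteq> {}" using qS LneE by auto
  hence n1: "n \<ge> 1" using fin n_def by (simp add: Suc_leI card_gt_0_iff)
  define g where "g = inv_into {1..n} f"
  have g: "\<And>x. x \<in> S \<Longrightarrow> g x \<in> {1..n} \<and> f (g x) = x"
    using f unfolding g_def
    by (metis bij_betw_def bij_betw_inv_into_right inv_into_into)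
  have qin: "\<And>\<alpha>. \<alpha> \<in> \<Lambda> \<Longrightarrow> q \<alpha> \<in> S" using qS by auto
  define \<Psi> where "\<Psi> = (\<lambda>w. \<Phi> (\<lambda>\<alpha>\<in>\<Lambda>. w (g (q \<alpha>))))"
  have embin: "(\<lambda>\<alpha>\<in>\<Lambda>. w (g (q \<alpha>))) \<in> power_verts \<Lambda> V" if "w \<in> power_verts {1..n} V" for w
    using that g qin unfolding power_verts_def by auto
  have "k_coloring (chromatic_number V E) (power_verts {1..n} V) (power_edges {1..n} E) \<Psi>"
    unfolding k_coloring_def proper_coloring_def
  proof (intro conjI ballI impI)
    fix w assume "w \<in> power_verts {1..n} V"
    thus "\<Psi> w < chromatic_number V E" using col embin unfolding \<Psi>_def k_coloring_def by blast
  next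
    fix u w assume u: "u \<in> power_verts {1..n} V" and w: "w \<in> power_verts {1..n} V"
      and e: "power_edges {1..n} E u w"
    have "power_edges \<Lambda> E (\<lambda>\<alpha>\<in>\<Lambda>. u (g (q \<alpha>))) (\<lambda>\<alpha>\<in>\<Lambda>. w (g (q \<alpha>)))"
      using e g qin unfolding power_edges_def by auto
    thus "\<Psi> u \<noteq> \<Psi> w" using col embin[OF u] embin[OF w]
      unfolding \<Psi>_def k_coloring_def proper_coloring_def by blast
  qed
  hence "trivial_coloring {1..n} V E \<Psi>" using tpc n1 unfolding trivially_power_colorable_def by blast
  then obtain i \<phi> where i: "i \<in> {1..n}" and ph: "\<forall>w\<in>power_verts {1..n} V. \<Psi> w = \<phi> (w i)"
    unfolding trivial_coloring_def by blast
  have fi: "f i \<in> S" using f i by (meson bij_betwE)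
  show ?thesis
  proof (intro bexI[OF _ fi] ballI)
    fix w assume w: "w \<in> S \<rightarrow>\<^sub>E V"
    define w1 where "w1 = (\<lambda>j\<in>{1..n}. w (f j))"
    define w2 where "w2 = (\<lambda>j\<in>{1..n}. w (f i))"
    have w1: "w1 \<in> power_verts {1..n} V" using w f unfolding w1_def power_verts_def
      by (auto simp: bij_betw_def)
    have w2: "w2 \<in> power_verts {1..n} V" using w fi unfolding w2_def power_verts_def by auto
    have "\<Psi> w1 = \<Phi> (\<lambda>\<alpha>\<in>\<Lambda>. w (q \<alpha>))" unfolding \<Psi>_def w1_def
      by (rule arg_cong[where f=\<Phi>], rule restrict_ext) (use g qin in fastforce)
    moreover have "\<Psi> w2 = \<Phi> (\<lambda>\<alpha>\<in>\<Lambda>. w (f i))" unfolding \<Psi>_def w2_def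
      by (rule arg_cong[where f=\<Phi>], rule restrict_ext) (use g qin in fastforce)
    moreover have "\<Psi> w1 = \<Psi> w2" using ph w1 w2 i unfolding w1_def w2_def by simp
    ultimately show "\<Phi> (\<lambda>\<alpha>\<in>\<Lambda>. w (q \<alpha>)) = \<Phi> (\<lambda>\<alpha>\<in>\<Lambda>. w (f i))" by simp
  qed
qed


lemma Phi0_col: "k_coloring (chromatic_number V E) V E (\<lambda>x. \<Phi> (\<lambda>\<alpha>\<in>\<Lambda>. x))"
proof -
  have c: "(\<lambda>\<alpha>\<in>\<Lambda>. x) \<in> power_verts \<Lambda> V" if "x \<in> V" for x
    using that unfolding power_verts_def by auto
  show ?thesis unfolding k_coloring_def proper_coloring_def
  proof (intro conjI ballI impI)
    fix x assume "x \<in> V" thus "\<Phi> (\<lambda>\<alpha>\<in>\<Lambda>. x) < chromatic_number V E"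
      using col c[of x] unfolding k_coloring_def by simp
  next
    fix x y assume "x \<in> V" "y \<in> V" "E x y"
    moreover have "power_edges \<Lambda> E (\<lambda>\<alpha>\<in>\<Lambda>. x) (\<lambda>\<alpha>\<in>\<Lambda>. y)"
      using \<open>E x y\<close> unfolding power_edges_def by auto
    ultimately show "\<Phi> (\<lambda>\<alpha>\<in>\<Lambda>. x) \<noteq> \<Phi> (\<lambda>\<alpha>\<in>\<Lambda>. y)"
      using col c[of x] c[of y] unfolding k_coloring_def proper_coloring_def by simp
  qed
qed

lemma ext_eq: "v \<in> power_verts \<Lambda> V \<Longrightarrow> (\<lambda>\<alpha>\<in>\<Lambda>. v \<alpha>) = v"
proof
  fix x assume v: "v \<in> power_verts \<Lambda> V"
  show "restrict v \<Lambda> x = v x"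
  proof (cases "x \<in> \<Lambda>")
    case False thus ?thesis using v PiE_arb[of v \<Lambda> "\<lambda>_. V" x] unfolding power_verts_def restrict_def by simp
  qed simp
qed

lemma edge_case:
  assumes x0: "x0 \<in> V" and y0: "y0 \<in> V"
    and ne: "\<Phi> (\<lambda>\<alpha>\<in>\<Lambda>. x0) \<noteq> \<Phi> (\<lambda>\<alpha>\<in>\<Lambda>. y0)"
  shows "\<exists>U. ultrafilter_on \<Lambda> U \<and>
           (\<forall>v\<in>power_verts \<Lambda> V. \<Phi> v = ult_coloring \<Lambda> U V (\<lambda>x. \<Phi> (\<lambda>\<alpha>\<in>\<Lambda>. x)) v)"
proof -
  define \<Phi>0 where "\<Phi>0 = (\<lambda>x. \<Phi> (\<lambda>\<alpha>\<in>\<Lambda>. x))"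
  define U where "U = {A. A \<subseteq> \<Lambda> \<and> (\<forall>v\<in>power_verts \<Lambda> V. \<forall>x\<in>V. (\<forall>\<alpha>\<in>A. v \<alpha> = x) \<longrightarrow> \<Phi> v = \<Phi>0 x)}"
  have up: "B \<in> U" if "A \<in> U" "A \<subseteq> B" "B \<subseteq> \<Lambda>" for A B
    using that unfolding U_def by blast
  have disj: "A \<inter> B \<noteq> {}" if A: "A \<in> U" and B: "B \<in> U" for A B
  proof
    assume d: "A \<inter> B = {}"
    define v where "v = (\<lambda>\<alpha>\<in>\<Lambda>. if \<alpha> \<in> A then x0 else y0)"
    have v: "v \<in> power_verts \<Lambda> V" unfolding v_def power_verts_def using x0 y0 by auto
    have "\<forall>\<alpha>\<in>A. v \<alpha> = x0" using A unfolding U_def v_def by auto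
    hence "\<Phi> v = \<Phi>0 x0" using A v x0 unfolding U_def by blast
    moreover have "\<forall>\<alpha>\<in>B. v \<alpha> = y0" using B d unfolding U_def v_def by auto
    hence "\<Phi> v = \<Phi>0 y0" using B v y0 unfolding U_def by blast
    ultimately show False using ne unfolding \<Phi>0_def by simp
  qed
  have fib: "{\<alpha>\<in>\<Lambda>. q \<alpha> = s} \<in> U"
    if fin: "finite (q ` \<Lambda>)" and s: "s \<in> q ` \<Lambda>"
      and P: "\<forall>w\<in>(q ` \<Lambda>) \<rightarrow>\<^sub>E V. \<Phi> (\<lambda>\<alpha>\<in>\<Lambda>. w (q \<alpha>)) = \<Phi> (\<lambda>\<alpha>\<in>\<Lambda>. w s)"
    for q :: "'i \<Rightarrow> 'b" and s
  proof -
    have "\<Phi> v = \<Phi>0 x" if v: "v \<in> power_verts \<Lambda> V" and x: "x \<in> V"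
      and cst: "\<forall>\<alpha>\<in>{\<alpha>\<in>\<Lambda>. q \<alpha> = s}. v \<alpha> = x" for v x
    proof -
      define q' where "q' = (\<lambda>\<alpha>. (q \<alpha>, v \<alpha>))"
      have vV: "\<And>\<alpha>. \<alpha> \<in> \<Lambda> \<Longrightarrow> v \<alpha> \<in> V" using v unfolding power_verts_def by auto
      have "q' ` \<Lambda> \<subseteq> q ` \<Lambda> \<times> V" unfolding q'_def using vV by auto
      moreover have "finite V" by (rule finV)
      ultimately have fin': "finite (q' ` \<Lambda>)" using fin by (meson finite_SigmaI finite_subset)
      obtain s' where s': "s' \<in> q' ` \<Lambda>"
        and P': "\<forall>w\<in>(q' ` \<Lambda>) \<rightarrow>\<^sub>E V. \<Phi> (\<lambda>\<alpha>\<in>\<Lambda>. w (q' \<alpha>)) = \<Phi> (\<lambda>\<alpha>\<in>\<Lambda>. w s')"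
        using L1[OF fin' refl] by blast
      have "fst s' = s"
      proof (rule ccontr)
        assume nes: "fst s' \<noteq> s"
        define w where "w = (\<lambda>t\<in>q ` \<Lambda>. if t = s then x0 else y0)"
        define w' where "w' = (\<lambda>t\<in>q' ` \<Lambda>. w (fst t))"
        have w: "w \<in> (q ` \<Lambda>) \<rightarrow>\<^sub>E V" unfolding w_def using x0 y0 by auto
        have fs: "fst s' \<in> q ` \<Lambda>" using s' unfolding q'_def by auto
        have w': "w' \<in> (q' ` \<Lambda>) \<rightarrow>\<^sub>E V" unfolding w'_def using w fs
          by (auto simp: q'_def)
        have e: "(\<lambda>\<alpha>\<in>\<Lambda>. w (q \<alpha>)) = (\<lambda>\<alpha>\<in>\<Lambda>. w' (q' \<alpha>))"
          by (rule restrict_ext) (simp add: w'_def q'_def)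
        have "\<Phi> (\<lambda>\<alpha>\<in>\<Lambda>. w s) = \<Phi> (\<lambda>\<alpha>\<in>\<Lambda>. w' s')" using P P' w w' e by metis
        moreover have "w s = x0" using s unfolding w_def by simp
        moreover have "w' s' = y0" using s' fs nes unfolding w'_def w_def by simp
        ultimately show False using ne by simp
      qed
      define w' where "w' = (\<lambda>t\<in>q' ` \<Lambda>. snd t)"
      have w': "w' \<in> (q' ` \<Lambda>) \<rightarrow>\<^sub>E V" unfolding w'_def q'_def using vV by auto
      have "(\<lambda>\<alpha>\<in>\<Lambda>. w' (q' \<alpha>)) = (\<lambda>\<alpha>\<in>\<Lambda>. v \<alpha>)"
        by (rule restrict_ext) (simp add: w'_def q'_def)
      hence "\<Phi> v = \<Phi> (\<lambda>\<alpha>\<in>\<Lambda>. w' s')" using P' w' ext_eq[OF v] by metis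
      moreover obtain \<alpha>0 where a0: "\<alpha>0 \<in> \<Lambda>" "s' = q' \<alpha>0" using s' by auto
      moreover have "q \<alpha>0 = s" using \<open>fst s' = s\<close> a0 unfolding q'_def by simp
      ultimately show ?thesis using cst s' unfolding w'_def q'_def \<Phi>0_def by simp
    qed
    thus ?thesis unfolding U_def by blast
  qed
  have LU: "\<Lambda> \<in> U" unfolding U_def
  proof (intro CollectI conjI subset_refl ballI impI)
    fix v x assume v: "v \<in> power_verts \<Lambda> V" and "x \<in> V" and c: "\<forall>\<alpha>\<in>\<Lambda>. v \<alpha> = x"
    have "v = (\<lambda>\<alpha>\<in>\<Lambda>. x)" using ext_eq[OF v] c by (metis restrict_ext)
    thus "\<Phi> v = \<Phi>0 x" unfolding \<Phi>0_def by simp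
  qed
  have emp: "{} \<notin> U" using disj by blast
  have inter: "A \<inter> B \<in> U" if A: "A \<in> U" and B: "B \<in> U" for A B
  proof -
    define q where "q = (\<lambda>\<alpha>. (\<alpha> \<in> A, \<alpha> \<in> B))"
    have fin: "finite (q ` \<Lambda>)" by simp
    obtain s where s: "s \<in> q ` \<Lambda>"
      and P: "\<forall>w\<in>(q ` \<Lambda>) \<rightarrow>\<^sub>E V. \<Phi> (\<lambda>\<alpha>\<in>\<Lambda>. w (q \<alpha>)) = \<Phi> (\<lambda>\<alpha>\<in>\<Lambda>. w s)"
      using L1[OF fin refl] by blast
    have F: "{\<alpha>\<in>\<Lambda>. q \<alpha> = s} \<in> U" using fib[OF fin s P] .
    obtain a where a: "a \<in> {\<alpha>\<in>\<Lambda>. q \<alpha> = s}" "a \<in> A" using disj[OF F A] by blast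
    obtain b where b: "b \<in> {\<alpha>\<in>\<Lambda>. q \<alpha> = s}" "b \<in> B" using disj[OF F B] by blast
    have "{\<alpha>\<in>\<Lambda>. q \<alpha> = s} \<subseteq> A \<inter> B" using a b unfolding q_def by auto
    moreover have "A \<inter> B \<subseteq> \<Lambda>" using A unfolding U_def by auto
    ultimately show ?thesis using up[OF F] by blast
  qed
  have compl: "A \<in> U \<or> \<Lambda> - A \<in> U" if A: "A \<subseteq> \<Lambda>" for A
  proof -
    define q where "q = (\<lambda>\<alpha>. \<alpha> \<in> A)"
    have fin: "finite (q ` \<Lambda>)" by simp
    obtain s where s: "s \<in> q ` \<Lambda>"
      and P: "\<forall>w\<in>(q ` \<Lambda>) \<rightarrow>\<^sub>E V. \<Phi> (\<lambda>\<alpha>\<in>\<Lambda>. w (q \<alpha>)) = \<Phi> (\<lambda>\<alpha>\<in>\<Lambda>. w s)"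
      using L1[OF fin refl] by blast
    have F: "{\<alpha>\<in>\<Lambda>. q \<alpha> = s} \<in> U" using fib[OF fin s P] .
    show ?thesis
    proof (cases s)
      case True
      hence "{\<alpha>\<in>\<Lambda>. q \<alpha> = s} = A" using A unfolding q_def by auto
      thus ?thesis using F by simp
    next
      case False
      hence "{\<alpha>\<in>\<Lambda>. q \<alpha> = s} = \<Lambda> - A" unfolding q_def by auto
      thus ?thesis using F by simp
    qed
  qed
  have sub: "U \<subseteq> Pow \<Lambda>" unfolding U_def by blast
  have ult: "ultrafilter_on \<Lambda> U" unfolding ultrafilter_on_def
  proof (intro conjI allI impI)
    fix A B assume "A \<in> U" "A \<subseteq> B" "B \<subseteq> \<Lambda>" thus "B \<in> U" by (rule up)
  next
    fix A B assume "A \<in> U" "B \<in> U" thus "A \<inter> B \<in> U" by (rule inter)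
  next
    fix A assume "A \<subseteq> \<Lambda>" thus "A \<in> U \<or> \<Lambda> - A \<in> U" by (rule compl)
  qed (fact sub LU emp)+
  have main: "\<Phi> v = ult_coloring \<Lambda> U V \<Phi>0 v" if v: "v \<in> power_verts \<Lambda> V" for v
  proof -
    have vV: "\<And>\<alpha>. \<alpha> \<in> \<Lambda> \<Longrightarrow> v \<alpha> \<in> V" using v unfolding power_verts_def by auto
    have fin: "finite (v ` \<Lambda>)" using finV vV by (meson finite_subset image_subsetI)
    obtain x where x: "x \<in> v ` \<Lambda>"
      and P: "\<forall>w\<in>(v ` \<Lambda>) \<rightarrow>\<^sub>E V. \<Phi> (\<lambda>\<alpha>\<in>\<Lambda>. w (v \<alpha>)) = \<Phi> (\<lambda>\<alpha>\<in>\<Lambda>. w x)"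
      using L1[OF fin refl] by blast
    have F: "{\<alpha>\<in>\<Lambda>. v \<alpha> = x} \<in> U" using fib[OF fin x P] .
    have xV: "x \<in> V" using x vV by auto
    define w where "w = (\<lambda>z\<in>v ` \<Lambda>. z)"
    have w: "w \<in> (v ` \<Lambda>) \<rightarrow>\<^sub>E V" unfolding w_def using vV by auto
    have "(\<lambda>\<alpha>\<in>\<Lambda>. w (v \<alpha>)) = (\<lambda>\<alpha>\<in>\<Lambda>. v \<alpha>)" by (rule restrict_ext) (simp add: w_def)
    moreover have "w x = x" using x unfolding w_def by simp
    ultimately have "\<Phi> v = \<Phi>0 x"
    proof -
      assume e1: "(\<lambda>\<alpha>\<in>\<Lambda>. w (v \<alpha>)) = (\<lambda>\<alpha>\<in>\<Lambda>. v \<alpha>)" and e2: "w x = x"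
      have "\<Phi> (\<lambda>\<alpha>\<in>\<Lambda>. w (v \<alpha>)) = \<Phi> (\<lambda>\<alpha>\<in>\<Lambda>. w x)" using P w by blast
      thus ?thesis unfolding e1 e2 ext_eq[OF v] \<Phi>0_def .
    qed
    moreover have "ult_point \<Lambda> U V v = x" unfolding ult_point_def
    proof (rule the_equality)
      show "x \<in> V \<and> {\<alpha>\<in>\<Lambda>. v \<alpha> = x} \<in> U" using xV F by simp
    next
      fix y assume "y \<in> V \<and> {\<alpha>\<in>\<Lambda>. v \<alpha> = y} \<in> U"
      thus "y = x" using disj[OF F] by blast
    qed
    ultimately show ?thesis unfolding ult_coloring_def by simp
  qed
  have "\<forall>v\<in>power_verts \<Lambda> V. \<Phi> v = ult_coloring \<Lambda> U V (\<lambda>x. \<Phi> (\<lambda>\<alpha>\<in>\<Lambda>. x)) v"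
    using main unfolding \<Phi>0_def by (rule ballI)
  with ult show ?thesis by (rule exI[of _ U, OF conjI])
qed

end

theorem mainTheorem15:
  fixes V :: "'a set" and E :: "'a \<Rightarrow> 'a \<Rightarrow> bool"
    and \<Lambda> :: "'i set" and \<Phi> :: "('i \<Rightarrow> 'a) \<Rightarrow> nat"
  assumes "simple_graph V E" and "finite V"
    and "trivially_power_colorable V E"
    and "infinite \<Lambda>"
    and "k_coloring (chromatic_number V E) (power_verts \<Lambda> V) (power_edges \<Lambda> E) \<Phi>"
  shows "\<exists>U \<phi>. ultrafilter_on \<Lambda> U \<and> k_coloring (chromatic_number V E) V E \<phi> \<and>
           (\<forall>v\<in>power_verts \<Lambda> V. \<Phi> v = ult_coloring \<Lambda> U V \<phi> v)"
proof -
  note sg = assms(1) and finV = assms(2) and tpc = assms(3) and col = assms(5)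
  have LneE: "\<Lambda> \<noteq> {}" using assms(4) by auto
  note P0 = Phi0_col[OF tpc finV LneE col]
  show ?thesis
  proof (cases "\<exists>x y. E x y")
    case True
    then obtain x0 y0 where e: "E x0 y0" by blast
    have xy: "x0 \<in> V" "y0 \<in> V" using e sg unfolding simple_graph_def by auto
    have ne: "\<Phi> (\<lambda>\<alpha>\<in>\<Lambda>. x0) \<noteq> \<Phi> (\<lambda>\<alpha>\<in>\<Lambda>. y0)"
      using P0 xy e unfolding k_coloring_def proper_coloring_def by blast
    obtain U where "ultrafilter_on \<Lambda> U"
      "\<forall>v\<in>power_verts \<Lambda> V. \<Phi> v = ult_coloring \<Lambda> U V (\<lambda>x. \<Phi> (\<lambda>\<alpha>\<in>\<Lambda>. x)) v"
      using edge_case[OF tpc finV LneE col xy ne] by blast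
    thus ?thesis using P0 by blast
  next
    case False
    obtain a where a: "a \<in> \<Lambda>" using LneE by blast
    define U where "U = {A. A \<subseteq> \<Lambda> \<and> a \<in> A}"
    have ult: "ultrafilter_on \<Lambda> U" unfolding ultrafilter_on_def U_def using a by auto
    have "k_coloring 1 V E (\<lambda>_. 0)" using False unfolding k_coloring_def proper_coloring_def by simp
    hence k1: "chromatic_number V E \<le> 1" unfolding chromatic_number_def by (metis Least_le)
    have "\<Phi> v = ult_coloring \<Lambda> U V (\<lambda>x. \<Phi> (\<lambda>\<alpha>\<in>\<Lambda>. x)) v" if v: "v \<in> power_verts \<Lambda> V" for v
    proof -
      have va: "v a \<in> V" using v a unfolding power_verts_def by auto
      have up: "ult_point \<Lambda> U V v = v a" unfolding ult_point_def U_def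
        by (rule the_equality) (use va a in auto)
      have "\<Phi> v < chromatic_number V E" using col v unfolding k_coloring_def by blast
      moreover have "\<Phi> (\<lambda>\<alpha>\<in>\<Lambda>. v a) < chromatic_number V E" using P0 va unfolding k_coloring_def by blast
      ultimately show ?thesis using k1 unfolding ult_coloring_def up by simp
    qed
    thus ?thesis using ult P0 by blast
  qed
qed

end
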